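(* For every cosieve $J\colon\mathbf{A}\to\mathbf{B}$ there is exactly one lens whose get functor is $J$, and this lens is a monomorphism in $\mathbf{Lens}$; conversely, the get functor of every monomorphism in $\mathbf{Lens}$ is a cosieve. Thus $U$ restricts to a bijection between monic lenses and cosieves.
   Context: A lens $F\colon \mathbf{A}\to\mathbf{B}$ between small categories consists of a functor $F\colon\mathbf{A}\to\mathbf{B}$ (the get functor) together with, for each object $A$ of $\mathbf{A}$, a function $\varphi_{F,A}$ from the set of morphisms of $\mathbf{B}$ with domain $FA$ to the set of morphisms of $\mathbf{A}$ with domain $A$, such that: $F(\varphi_{F,A}b)=b$; $\varphi_{F,A}(\mathrm{id}_{FA})=\mathrm{id}_A$; and $\varphi_{F,A}(b'\circ b)=\varphi_{F,A'}(b')\circ\varphi_{F,A}(b)$ whenever $b$ has domain $FA$, $A'$ is the codomain of $\varphi_{F,A}b$, and $b'$ has domain $FA'$. $\mathbf{Lens}$ is the category of small categories and lenses, with composite of $F\colon\mathbf{A}\to\mathbf{B}$, $G\colon\mathbf{B}\to\mathbf{C}$ having get functor $G\circ F$ and puts $\varphi_{G\circ F,A}(c)=\varphi_{F,A}(\varphi_{G,FA}(c))$. $U\colon\mathbf{Lens}\to\mathbf{Cat}$ sends a lens to its get functor. A functor $F\colon\mathbf{A}\to\mathbf{B}$ is a discrete opfibration if for each object $A$ of $\mathbf{A}$ and each morphism $b$ of $\mathbf{B}$ with domain $FA$ there is a unique morphism $a$ of $\mathbf{A}$ with domain $A$ and $Fa=b$. A cosieve is a discrete opfibration that is injective on objects.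 *)

theory Defs
  imports Main
begin

text \<open>Small categories, represented concretely: a set of objects, a set of
morphisms, domain, codomain, identities and composition (Comp g f = g after f).\<close>

record ('o, 'm) cat =
  Obj  :: "'o set"
  Mor  :: "'m set"
  Dom  :: "'m \<Rightarrow> 'o"
  Cod  :: "'m \<Rightarrow> 'o"
  Ide  :: "'o \<Rightarrow> 'm"
  Comp :: "'m \<Rightarrow> 'm \<Rightarrow> 'm"

definition is_category :: "('o, 'm) cat \<Rightarrow> bool" where
  "is_category C \<longleftrightarrow>
     (\<forall>f\<in>Mor C. Dom C f \<in> Obj C \<and> Cod C f \<in> Obj C) \<and>
     (\<forall>x\<in>Obj C. Ide C x \<in> Mor C \<and> Dom C (Ide C x) = x \<and> Cod C (Ide C x) = x) \<and>
     (\<forall>f\<in>Mor C. \<forall>g\<in>Mor C. Cod C f = Dom C g \<longrightarrow>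
        Comp C g f \<in> Mor C \<and> Dom C (Comp C g f) = Dom C f \<and> Cod C (Comp C g f) = Cod C g) \<and>
     (\<forall>f\<in>Mor C. Comp C f (Ide C (Dom C f)) = f \<and> Comp C (Ide C (Cod C f)) f = f) \<and>
     (\<forall>f\<in>Mor C. \<forall>g\<in>Mor C. \<forall>h\<in>Mor C. Cod C f = Dom C g \<longrightarrow> Cod C g = Dom C h \<longrightarrow>
        Comp C h (Comp C g f) = Comp C (Comp C h g) f)"

text \<open>A functor given by its object map and morphism map (only their values on
the carriers matter).\<close>

definition is_functor ::
  "('oa, 'ma) cat \<Rightarrow> ('ob, 'mb) cat \<Rightarrow> ('oa \<Rightarrow> 'ob) \<Rightarrow> ('ma \<Rightarrow> 'mb) \<Rightarrow> bool" where
  "is_functor A B Fo Fm \<longleftrightarrow>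
     (\<forall>x\<in>Obj A. Fo x \<in> Obj B) \<and>
     (\<forall>f\<in>Mor A. Fm f \<in> Mor B \<and> Dom B (Fm f) = Fo (Dom A f) \<and> Cod B (Fm f) = Fo (Cod A f)) \<and>
     (\<forall>x\<in>Obj A. Fm (Ide A x) = Ide B (Fo x)) \<and>
     (\<forall>f\<in>Mor A. \<forall>g\<in>Mor A. Cod A f = Dom A g \<longrightarrow> Fm (Comp A g f) = Comp B (Fm g) (Fm f))"

text \<open>A lens: get functor (object map, morphism map) together with the put
operation  put x b  (x an object of A, b a morphism of B with domain get x).\<close>

type_synonym ('oa, 'ma, 'ob, 'mb) lens =
  "('oa \<Rightarrow> 'ob) \<times> ('ma \<Rightarrow> 'mb) \<times> ('oa \<Rightarrow> 'mb \<Rightarrow> 'ma)"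

definition is_lens ::
  "('oa, 'ma) cat \<Rightarrow> ('ob, 'mb) cat \<Rightarrow> ('oa, 'ma, 'ob, 'mb) lens \<Rightarrow> bool" where
  "is_lens A B F \<longleftrightarrow> (case F of (Fo, Fm, put) \<Rightarrow>
     is_functor A B Fo Fm \<and>
     (\<forall>x\<in>Obj A. \<forall>b\<in>Mor B. Dom B b = Fo x \<longrightarrow>
        put x b \<in> Mor A \<and> Dom A (put x b) = x \<and> Fm (put x b) = b) \<and>
     (\<forall>x\<in>Obj A. put x (Ide B (Fo x)) = Ide A x) \<and>
     (\<forall>x\<in>Obj A. \<forall>b\<in>Mor B. \<forall>b'\<in>Mor B. Dom B b = Fo x \<longrightarrow>
        Dom B b' = Fo (Cod A (put x b)) \<longrightarrow>
        put x (Comp B b' b) = Comp A (put (Cod A (put x b)) b') (put x b)))"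

definition lens_eq ::
  "('oa, 'ma) cat \<Rightarrow> ('ob, 'mb) cat \<Rightarrow> ('oa, 'ma, 'ob, 'mb) lens \<Rightarrow> ('oa, 'ma, 'ob, 'mb) lens \<Rightarrow> bool" where
  "lens_eq A B F G \<longleftrightarrow> (case F of (Fo, Fm, p) \<Rightarrow> case G of (Go, Gm, q) \<Rightarrow>
     (\<forall>x\<in>Obj A. Fo x = Go x) \<and> (\<forall>f\<in>Mor A. Fm f = Gm f) \<and>
     (\<forall>x\<in>Obj A. \<forall>b\<in>Mor B. Dom B b = Fo x \<longrightarrow> p x b = q x b))"

definition lens_comp ::
  "('ob, 'mb, 'oc, 'mc) lens \<Rightarrow> ('oa, 'ma, 'ob, 'mb) lens \<Rightarrow> ('oa, 'ma, 'oc, 'mc) lens" where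
  "lens_comp G F = (case G of (Go, Gm, q) \<Rightarrow> case F of (Fo, Fm, p) \<Rightarrow>
     (Go \<circ> Fo, Gm \<circ> Fm, \<lambda>x c. p x (q (Fo x) c)))"

text \<open>Monomorphism in Lens.  The test categories range over all small categories
whose objects and morphisms live in the types 'x and 'y (the "universe"),
fixed via the itself-argument.\<close>

definition lens_mono ::
  "('x \<times> 'y) itself \<Rightarrow> ('oa, 'ma) cat \<Rightarrow> ('ob, 'mb) cat \<Rightarrow> ('oa, 'ma, 'ob, 'mb) lens \<Rightarrow> bool" where
  "lens_mono U A B F \<longleftrightarrow>
     (\<forall>(X :: ('x, 'y) cat) G H. is_category X \<and> is_lens X A G \<and> is_lens X A H \<and>
        lens_eq X B (lens_comp F G) (lens_comp F H) \<longrightarrow> lens_eq X A G H)"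

definition discrete_opfibration ::
  "('oa, 'ma) cat \<Rightarrow> ('ob, 'mb) cat \<Rightarrow> ('oa \<Rightarrow> 'ob) \<Rightarrow> ('ma \<Rightarrow> 'mb) \<Rightarrow> bool" where
  "discrete_opfibration A B Fo Fm \<longleftrightarrow> is_functor A B Fo Fm \<and>
     (\<forall>x\<in>Obj A. \<forall>b\<in>Mor B. Dom B b = Fo x \<longrightarrow> (\<exists>!a. a \<in> Mor A \<and> Dom A a = x \<and> Fm a = b))"

definition cosieve ::
  "('oa, 'ma) cat \<Rightarrow> ('ob, 'mb) cat \<Rightarrow> ('oa \<Rightarrow> 'ob) \<Rightarrow> ('ma \<Rightarrow> 'mb) \<Rightarrow> bool" where
  "cosieve A B Fo Fm \<longleftrightarrow> discrete_opfibration A B Fo Fm \<and> inj_on Fo (Obj A)"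

end

theory Submission
  imports Defs
begin

lemma cosieve_lift_unique:
  assumes "cosieve A B Jo Jm" "x \<in> Obj A" "a1 \<in> Mor A" "a2 \<in> Mor A"
    "Dom A a1 = x" "Dom A a2 = x" "Jm a1 = Jm a2" "Jm a1 \<in> Mor B"
  shows "a1 = a2"
proof -
  have f: "is_functor A B Jo Jm" using assms(1) by (simp add: cosieve_def discrete_opfibration_def)
  have "Dom B (Jm a1) = Jo x" using f assms unfolding is_functor_def by auto
  then have "\<exists>!a. a \<in> Mor A \<and> Dom A a = x \<and> Jm a = Jm a1"
    using assms(1,2,8) by (simp add: cosieve_def discrete_opfibration_def)
  then show ?thesis using assms(3-7) by (metis (no_types))
qed

lemma part1_exists:
  assumes A: "is_category A" and B: "is_category B" and J: "cosieve A B Jo Jm"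
  shows "\<exists>put. is_lens A B (Jo, Jm, put)"
proof -
  have f: "is_functor A B Jo Jm" using J by (simp add: cosieve_def discrete_opfibration_def)
  have ex: "\<And>x b. x \<in> Obj A \<Longrightarrow> b \<in> Mor B \<Longrightarrow> Dom B b = Jo x \<Longrightarrow>
      \<exists>!a. a \<in> Mor A \<and> Dom A a = x \<and> Jm a = b"
    using J by (simp add: cosieve_def discrete_opfibration_def)
  define put where "put x b = (THE a. a \<in> Mor A \<and> Dom A a = x \<and> Jm a = b)" for x b
  have P: "put x b \<in> Mor A \<and> Dom A (put x b) = x \<and> Jm (put x b) = b"
    if "x \<in> Obj A" "b \<in> Mor B" "Dom B b = Jo x" for x b
    unfolding put_def by (rule theI') (rule ex[OF that])
  have U: "put x b = a" if "x \<in> Obj A" "b \<in> Mor B" "Dom B b = Jo x"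
     "a \<in> Mor A" "Dom A a = x" "Jm a = b" for x b a
    unfolding put_def using ex[OF that(1-3)] that by (blast intro: the1_equality)
  have "is_lens A B (Jo, Jm, put)"
    unfolding is_lens_def
  proof (simp, intro conjI ballI impI)
    show "is_functor A B Jo Jm" by (rule f)
  next
    fix x b assume "x \<in> Obj A" "b \<in> Mor B" "Dom B b = Jo x"
    then show "put x b \<in> Mor A" "Dom A (put x b) = x" "Jm (put x b) = b" using P by auto
  next
    fix x assume x: "x \<in> Obj A"
    show "put x (Ide B (Jo x)) = Ide A x"
      apply (rule U) using x f A B unfolding is_functor_def is_category_def by auto
  next
    fix x b b' assume x: "x \<in> Obj A" and b: "b \<in> Mor B" "b' \<in> Mor B" "Dom B b = Jo x"
      "Dom B b' = Jo (Cod A (put x b))"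
    have p1: "put x b \<in> Mor A" "Dom A (put x b) = x" "Jm (put x b) = b" using P x b by auto
    have c: "Cod A (put x b) \<in> Obj A" using p1 A unfolding is_category_def by auto
    have p2: "put (Cod A (put x b)) b' \<in> Mor A" "Dom A (put (Cod A (put x b)) b') = Cod A (put x b)"
       "Jm (put (Cod A (put x b)) b') = b'" using P c b by auto
    show "put x (Comp B b' b) = Comp A (put (Cod A (put x b)) b') (put x b)"
    proof (rule U)
      show "x \<in> Obj A" by (rule x)
      have cb: "Cod B b = Dom B b'" using b p1 f unfolding is_functor_def by metis
      then show "Comp B b' b \<in> Mor B" "Dom B (Comp B b' b) = Jo x" using B b unfolding is_category_def by auto
      show "Comp A (put (Cod A (put x b)) b') (put x b) \<in> Mor A"
           "Dom A (Comp A (put (Cod A (put x b)) b') (put x b)) = x"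
        using A p1 p2 unfolding is_category_def by auto
      show "Jm (Comp A (put (Cod A (put x b)) b') (put x b)) = Comp B b' b"
        using f p1 p2 unfolding is_functor_def by auto
    qed
  qed
  then show ?thesis by blast
qed

lemma part1_unique:
  assumes J: "cosieve A B Jo Jm" and L: "is_lens A B (Jo, Jm, put)" "is_lens A B (Jo, Jm, put')"
  shows "lens_eq A B (Jo, Jm, put) (Jo, Jm, put')"
  unfolding lens_eq_def
proof (simp, intro ballI impI)
  fix x b assume "x \<in> Obj A" "b \<in> Mor B" "Dom B b = Jo x"
  then show "put x b = put' x b"
    using L cosieve_lift_unique[OF J, of x "put x b" "put' x b"] unfolding is_lens_def by auto
qed

lemma part1_mono:
  assumes J: "cosieve A B Jo Jm" and L: "is_lens A B (Jo, Jm, put)"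
  shows "lens_mono U A B (Jo, Jm, put)"
  unfolding lens_mono_def
proof (intro allI impI, elim conjE)
  fix X :: "('x,'y) cat" and G H
  assume X: "is_category X" and G: "is_lens X A G" and H: "is_lens X A H"
    and E: "lens_eq X B (lens_comp (Jo, Jm, put) G) (lens_comp (Jo, Jm, put) H)"
  obtain Go Gm p where Gd: "G = (Go, Gm, p)" by (cases G) auto
  obtain Ho Hm q where Hd: "H = (Ho, Hm, q)" by (cases H) auto
  have fJ: "is_functor A B Jo Jm" using J by (simp add: cosieve_def discrete_opfibration_def)
  have injJ: "inj_on Jo (Obj A)" using J by (simp add: cosieve_def)
  have fG: "is_functor X A Go Gm" and pG: "\<And>x b. x\<in>Obj X \<Longrightarrow> b\<in>Mor A \<Longrightarrow> Dom A b = Go x \<Longrightarrow>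
        p x b \<in> Mor X \<and> Dom X (p x b) = x \<and> Gm (p x b) = b" using G Gd unfolding is_lens_def by auto
  have fH: "is_functor X A Ho Hm" and pH: "\<And>x b. x\<in>Obj X \<Longrightarrow> b\<in>Mor A \<Longrightarrow> Dom A b = Ho x \<Longrightarrow>
        q x b \<in> Mor X \<and> Dom X (q x b) = x \<and> Hm (q x b) = b" using H Hd unfolding is_lens_def by auto
  have pJ: "\<And>x b. x\<in>Obj A \<Longrightarrow> b\<in>Mor B \<Longrightarrow> Dom B b = Jo x \<Longrightarrow>
        put x b \<in> Mor A \<and> Dom A (put x b) = x \<and> Jm (put x b) = b" using L unfolding is_lens_def by auto
  have E1: "\<And>x. x \<in> Obj X \<Longrightarrow> Jo (Go x) = Jo (Ho x)"
   and E2: "\<And>f. f \<in> Mor X \<Longrightarrow> Jm (Gm f) = Jm (Hm f)"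
   and E3: "\<And>x c. x \<in> Obj X \<Longrightarrow> c \<in> Mor B \<Longrightarrow> Dom B c = Jo (Go x) \<Longrightarrow>
        p x (put (Go x) c) = q x (put (Ho x) c)"
    using E unfolding lens_eq_def lens_comp_def Gd Hd by auto
  have O: "Go x = Ho x" if x: "x \<in> Obj X" for x
    using injJ E1[OF x] fG fH x unfolding is_functor_def inj_on_def by blast
  have M: "Gm f = Hm f" if f: "f \<in> Mor X" for f
  proof -
    have d: "Dom X f \<in> Obj X" using X f unfolding is_category_def by auto
    show ?thesis
    proof (rule cosieve_lift_unique[OF J, of "Go (Dom X f)"])
      show "Go (Dom X f) \<in> Obj A" using fG d unfolding is_functor_def by auto
      show "Gm f \<in> Mor A" "Hm f \<in> Mor A" "Dom A (Gm f) = Go (Dom X f)" "Dom A (Hm f) = Go (Dom X f)"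
        using fG fH f O[OF d] unfolding is_functor_def by auto
      show "Jm (Gm f) = Jm (Hm f)" by (rule E2[OF f])
      show "Jm (Gm f) \<in> Mor B" using fG fJ f unfolding is_functor_def by auto
    qed
  qed
  have P: "p x b = q x b" if x: "x \<in> Obj X" and b: "b \<in> Mor A" "Dom A b = Go x" for x b
  proof -
    have gx: "Go x \<in> Obj A" using fG x unfolding is_functor_def by auto
    have jb: "Jm b \<in> Mor B" "Dom B (Jm b) = Jo (Go x)" using fJ b unfolding is_functor_def by auto
    have "put (Go x) (Jm b) = b"
      using cosieve_lift_unique[OF J gx, of "put (Go x) (Jm b)" b] pJ[OF gx jb] b jb by auto
    moreover have "put (Ho x) (Jm b) = b" using calculation O[OF x] by simp
    ultimately show ?thesis using E3[OF x jb] by simp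
  qed
  show "lens_eq X A G H" unfolding lens_eq_def Gd Hd using O M P by auto
qed


definition tcat :: "('o \<Rightarrow> 'x) \<Rightarrow> ('m \<Rightarrow> 'y) \<Rightarrow> ('o,'m) cat \<Rightarrow> ('x,'y) cat" where
  "tcat i j C = \<lparr>Obj = i ` Obj C, Mor = j ` Mor C,
     Dom = (\<lambda>m. i (Dom C (inv j m))), Cod = (\<lambda>m. i (Cod C (inv j m))),
     Ide = (\<lambda>x. j (Ide C (inv i x))), Comp = (\<lambda>g f. j (Comp C (inv j g) (inv j f)))\<rparr>"

definition tlens where
  "tlens i j G = (case G of (Go, Gm, p) \<Rightarrow> (Go \<circ> inv i, Gm \<circ> inv j, \<lambda>x b. j (p (inv i x) b)))"

lemma tcat_cat:
  assumes C: "is_category C" and i: "inj i" and j: "inj j"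
  shows "is_category (tcat i j C)"
  using C unfolding is_category_def tcat_def
  by (simp add: inv_f_f[OF i] inv_f_f[OF j] inj_eq[OF i] inj_eq[OF j])

lemma tlens_lens:
  assumes G: "is_lens C A (Go, Gm, p)" and i: "inj i" and j: "inj j"
  shows "is_lens (tcat i j C) A (tlens i j (Go, Gm, p))"
  using G unfolding is_lens_def is_functor_def tcat_def tlens_def
  by (simp add: inv_f_f[OF i] inv_f_f[OF j] inj_eq[OF i] inj_eq[OF j])

lemma tlens_eq_comp:
  assumes E: "lens_eq C B (lens_comp F (Go, Gm, p)) (lens_comp F (Ho, Hm, q))"
    and i: "inj i" and j: "inj j"
  shows "lens_eq (tcat i j C) B (lens_comp F (tlens i j (Go, Gm, p))) (lens_comp F (tlens i j (Ho, Hm, q)))"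
  using E unfolding lens_eq_def lens_comp_def tcat_def tlens_def
  by (cases F) (simp add: inv_f_f[OF i] inv_f_f[OF j])

lemma tlens_eq_back:
  assumes E: "lens_eq (tcat i j C) A (tlens i j (Go, Gm, p)) (tlens i j (Ho, Hm, q))"
    and i: "inj i" and j: "inj j"
  shows "lens_eq C A (Go, Gm, p) (Ho, Hm, q)"
  using E unfolding lens_eq_def tcat_def tlens_def
  by (simp add: inv_f_f[OF i] inv_f_f[OF j] inj_eq[OF j])

lemma mono_transport:
  assumes M: "lens_mono (U :: ('x \<times> 'y) itself) A B F"
    and i: "inj (i :: 'o \<Rightarrow> 'x)" and j: "inj (j :: 'm \<Rightarrow> 'y)"
    and C: "is_category (C :: ('o,'m) cat)" and G: "is_lens C A (Go, Gm, p)" and H: "is_lens C A (Ho, Hm, q)"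
    and E: "lens_eq C B (lens_comp F (Go, Gm, p)) (lens_comp F (Ho, Hm, q))"
  shows "lens_eq C A (Go, Gm, p) (Ho, Hm, q)"
proof -
  have "lens_eq (tcat i j C) A (tlens i j (Go, Gm, p)) (tlens i j (Ho, Hm, q))"
    using M tcat_cat[OF C i j] tlens_lens[OF G i j] tlens_lens[OF H i j] tlens_eq_comp[OF E i j]
    unfolding lens_mono_def by blast
  then show ?thesis by (rule tlens_eq_back[OF _ i j])
qed


definition kcat :: "('oa,'ma) cat \<Rightarrow> ('oa \<Rightarrow> 'ob) \<Rightarrow> ('ma \<Rightarrow> 'mb) \<Rightarrow> ('oa \<times> 'oa, 'ma \<times> 'ma) cat" where
  "kcat A Fo Fm = \<lparr>Obj = {(a,a'). a \<in> Obj A \<and> a' \<in> Obj A \<and> Fo a = Fo a'},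
     Mor = {(f,f'). f \<in> Mor A \<and> f' \<in> Mor A \<and> Fm f = Fm f'},
     Dom = (\<lambda>(f,f'). (Dom A f, Dom A f')), Cod = (\<lambda>(f,f'). (Cod A f, Cod A f')),
     Ide = (\<lambda>(a,a'). (Ide A a, Ide A a')),
     Comp = (\<lambda>(g,g') (f,f'). (Comp A g f, Comp A g' f'))\<rparr>"

lemma kcat_cat:
  assumes A: "is_category A" and F: "is_functor A B Fo Fm"
  shows "is_category (kcat A Fo Fm)"
proof -
  note a = A[unfolded is_category_def] and f = F[unfolded is_functor_def]
  have fd: "Fo (Dom A g) = Dom B (Fm g)" "Fo (Cod A g) = Cod B (Fm g)" if "g \<in> Mor A" for g
    using f that by auto
  show ?thesis unfolding is_category_def kcat_def
    apply (intro conjI)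
    using a f by (auto simp: split_beta fd)
qed


definition pi1 :: "('oa \<Rightarrow> 'ob) \<Rightarrow> ('ma \<Rightarrow> 'mb) \<Rightarrow> ('oa \<Rightarrow> 'mb \<Rightarrow> 'ma) \<Rightarrow> ('oa \<times> 'oa, 'ma \<times> 'ma, 'oa, 'ma) lens" where
  "pi1 Fo Fm p = (fst, fst, \<lambda>x f. (f, p (snd x) (Fm f)))"
definition pi2 :: "('oa \<Rightarrow> 'ob) \<Rightarrow> ('ma \<Rightarrow> 'mb) \<Rightarrow> ('oa \<Rightarrow> 'mb \<Rightarrow> 'ma) \<Rightarrow> ('oa \<times> 'oa, 'ma \<times> 'ma, 'oa, 'ma) lens" where
  "pi2 Fo Fm p = (snd, snd, \<lambda>x f. (p (fst x) (Fm f), f))"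

locale lensctx =
  fixes A :: "('oa,'ma) cat" and B :: "('ob,'mb) cat" and Fo Fm p
  assumes A: "is_category A" and B: "is_category B" and L: "is_lens A B (Fo, Fm, p)"
begin

lemma F: "is_functor A B Fo Fm" using L by (simp add: is_lens_def)

lemma a: "\<And>f. f \<in> Mor A \<Longrightarrow> Dom A f \<in> Obj A \<and> Cod A f \<in> Obj A"
  "\<And>x. x \<in> Obj A \<Longrightarrow> Ide A x \<in> Mor A \<and> Dom A (Ide A x) = x \<and> Cod A (Ide A x) = x"
  "\<And>f g. f \<in> Mor A \<Longrightarrow> g \<in> Mor A \<Longrightarrow> Cod A f = Dom A g \<Longrightarrow>
        Comp A g f \<in> Mor A \<and> Dom A (Comp A g f) = Dom A f \<and> Cod A (Comp A g f) = Cod A g"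
  using A unfolding is_category_def by auto

lemma f: "\<And>x. x \<in> Obj A \<Longrightarrow> Fo x \<in> Obj B"
  "\<And>f. f \<in> Mor A \<Longrightarrow> Fm f \<in> Mor B \<and> Dom B (Fm f) = Fo (Dom A f) \<and> Cod B (Fm f) = Fo (Cod A f)"
  "\<And>x. x \<in> Obj A \<Longrightarrow> Fm (Ide A x) = Ide B (Fo x)"
  "\<And>f g. f \<in> Mor A \<Longrightarrow> g \<in> Mor A \<Longrightarrow> Cod A f = Dom A g \<Longrightarrow> Fm (Comp A g f) = Comp B (Fm g) (Fm f)"
  using F unfolding is_functor_def by auto

lemma pm: "\<And>x b. x \<in> Obj A \<Longrightarrow> b \<in> Mor B \<Longrightarrow> Dom B b = Fo x \<Longrightarrow>
        p x b \<in> Mor A \<and> Dom A (p x b) = x \<and> Fm (p x b) = b"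
  and pid: "\<And>x. x \<in> Obj A \<Longrightarrow> p x (Ide B (Fo x)) = Ide A x"
  and pc: "\<And>x b b'. x\<in>Obj A \<Longrightarrow> b\<in>Mor B \<Longrightarrow> b'\<in>Mor B \<Longrightarrow> Dom B b = Fo x \<Longrightarrow>
        Dom B b' = Fo (Cod A (p x b)) \<Longrightarrow>
        p x (Comp B b' b) = Comp A (p (Cod A (p x b)) b') (p x b)"
  using L unfolding is_lens_def by auto

abbreviation "K \<equiv> kcat A Fo Fm"

lemma K_cat: "is_category K" by (rule kcat_cat[OF A F])

lemma pi1_lens: "is_lens K A (pi1 Fo Fm p)"
  unfolding is_lens_def pi1_def
proof (simp, intro conjI ballI impI)
  show "is_functor K A fst fst"
    unfolding is_functor_def kcat_def by (auto simp: split_beta)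
next
  fix x b assume x: "x \<in> Obj K" and b: "b \<in> Mor A" "Dom A b = fst x"
  obtain a a' where xd: "x = (a,a')" by (cases x)
  have aa: "a \<in> Obj A" "a' \<in> Obj A" "Fo a = Fo a'" using x xd by (auto simp: kcat_def)
  have fb: "Fm b \<in> Mor B" "Dom B (Fm b) = Fo a'" using f(2)[OF b(1)] b aa xd by auto
  note P = pm[OF aa(2) fb]
  show "(b, p (snd x) (Fm b)) \<in> Mor K" "Dom K (b, p (snd x) (Fm b)) = x"
    using P b xd by (auto simp: kcat_def)
next
  fix x assume x: "x \<in> Obj K"
  obtain a a' where xd: "x = (a,a')" by (cases x)
  have aa: "a \<in> Obj A" "a' \<in> Obj A" "Fo a = Fo a'" using x xd by (auto simp: kcat_def)
  show "(Ide A (fst x), p (snd x) (Fm (Ide A (fst x)))) = Ide K x"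
    using aa xd f(3) pid by (simp add: kcat_def)
next
  fix x b b' assume x: "x \<in> Obj K" and b: "b \<in> Mor A" "b' \<in> Mor A" "Dom A b = fst x"
    and b': "Dom A b' = fst (Cod K (b, p (snd x) (Fm b)))"
  obtain a a' where xd: "x = (a,a')" by (cases x)
  have aa: "a \<in> Obj A" "a' \<in> Obj A" "Fo a = Fo a'" using x xd by (auto simp: kcat_def)
  have fb: "Fm b \<in> Mor B" "Dom B (Fm b) = Fo a'" using f(2)[OF b(1)] b aa xd by auto
  note P = pm[OF aa(2) fb]
  have cb: "Cod A b = Dom A b'" using b' by (simp add: kcat_def)
  have fb': "Fm b' \<in> Mor B" "Dom B (Fm b') = Fo (Cod A (p a' (Fm b)))"
    using f(2)[OF b(2)] f(2)[OF b(1)] f(2)[OF conjunct1[OF P]] P cb by auto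
  have "p a' (Fm (Comp A b' b)) = Comp A (p (Cod A (p a' (Fm b))) (Fm b')) (p a' (Fm b))"
    using f(4)[OF b(1,2) cb] pc[OF aa(2) fb(1) fb'(1) fb(2) fb'(2)] by simp
  then show "(Comp A b' b, p (snd x) (Fm (Comp A b' b))) =
      Comp K (b', p (snd (Cod K (b, p (snd x) (Fm b)))) (Fm b')) (b, p (snd x) (Fm b))"
    using xd by (simp add: kcat_def)
qed

lemma pi2_lens: "is_lens K A (pi2 Fo Fm p)"
  unfolding is_lens_def pi2_def
proof (simp, intro conjI ballI impI)
  show "is_functor K A snd snd"
    unfolding is_functor_def kcat_def by (auto simp: split_beta)
next
  fix x b assume x: "x \<in> Obj K" and b: "b \<in> Mor A" "Dom A b = snd x"
  obtain a a' where xd: "x = (a',a)" by (cases x)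
  have aa: "a \<in> Obj A" "a' \<in> Obj A" "Fo a = Fo a'" using x xd by (auto simp: kcat_def)
  have fb: "Fm b \<in> Mor B" "Dom B (Fm b) = Fo a'" using f(2)[OF b(1)] b aa xd by auto
  note P = pm[OF aa(2) fb]
  show "(p (fst x) (Fm b), b) \<in> Mor K" "Dom K (p (fst x) (Fm b), b) = x"
    using P b xd by (auto simp: kcat_def)
next
  fix x assume x: "x \<in> Obj K"
  obtain a a' where xd: "x = (a',a)" by (cases x)
  have aa: "a \<in> Obj A" "a' \<in> Obj A" "Fo a = Fo a'" using x xd by (auto simp: kcat_def)
  show "(p (fst x) (Fm (Ide A (snd x))), Ide A (snd x)) = Ide K x"
    using aa xd f(3) pid by (simp add: kcat_def)
next
  fix x b b' assume x: "x \<in> Obj K" and b: "b \<in> Mor A" "b' \<in> Mor A" "Dom A b = snd x"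
    and b': "Dom A b' = snd (Cod K (p (fst x) (Fm b), b))"
  obtain a a' where xd: "x = (a',a)" by (cases x)
  have aa: "a \<in> Obj A" "a' \<in> Obj A" "Fo a = Fo a'" using x xd by (auto simp: kcat_def)
  have fb: "Fm b \<in> Mor B" "Dom B (Fm b) = Fo a'" using f(2)[OF b(1)] b aa xd by auto
  note P = pm[OF aa(2) fb]
  have cb: "Cod A b = Dom A b'" using b' by (simp add: kcat_def)
  have fb': "Fm b' \<in> Mor B" "Dom B (Fm b') = Fo (Cod A (p a' (Fm b)))"
    using f(2)[OF b(2)] f(2)[OF b(1)] f(2)[OF conjunct1[OF P]] P cb by auto
  have "p a' (Fm (Comp A b' b)) = Comp A (p (Cod A (p a' (Fm b))) (Fm b')) (p a' (Fm b))"
    using f(4)[OF b(1,2) cb] pc[OF aa(2) fb(1) fb'(1) fb(2) fb'(2)] by simp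
  then show "(p (fst x) (Fm (Comp A b' b)), Comp A b' b) =
      Comp K (p (fst (Cod K (p (fst x) (Fm b), b))) (Fm b'), b') (p (fst x) (Fm b), b)"
    using xd by (simp add: kcat_def)
qed

lemma pi_eq: "lens_eq K B (lens_comp (Fo, Fm, p) (pi1 Fo Fm p)) (lens_comp (Fo, Fm, p) (pi2 Fo Fm p))"
proof -
  have P: "p (fst x) (Fm (p (snd x) c)) = p (fst x) c \<and> p (snd x) (Fm (p (fst x) c)) = p (snd x) c"
    if x: "x \<in> Obj K" and c: "c \<in> Mor B" "Dom B c = Fo (fst x)" for x c
  proof -
    obtain a a' where xd: "x = (a,a')" by (cases x)
    have aa: "a \<in> Obj A" "a' \<in> Obj A" "Fo a = Fo a'" using x xd by (auto simp: kcat_def)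
    show ?thesis using pm[OF aa(1) c(1)] pm[OF aa(2) c(1)] c aa xd by auto
  qed
  have O: "\<forall>x\<in>Obj K. Fo (fst x) = Fo (snd x)" by (auto simp: kcat_def)
  have M: "\<forall>g\<in>Mor K. Fm (fst g) = Fm (snd g)" by (auto simp: kcat_def)
  show ?thesis
    unfolding lens_eq_def lens_comp_def pi1_def pi2_def using P O M by simp
qed

lemma converse:
  assumes M: "lens_mono (U :: ('x \<times> 'y) itself) A B (Fo, Fm, p)"
    and i: "inj (i :: 'oa \<times> 'oa \<Rightarrow> 'x)" and j: "inj (j :: 'ma \<times> 'ma \<Rightarrow> 'y)"
  shows "cosieve A B Fo Fm"
proof -
  have E: "lens_eq K A (pi1 Fo Fm p) (pi2 Fo Fm p)"
    using mono_transport[OF M i j K_cat pi1_lens[unfolded pi1_def] pi2_lens[unfolded pi2_def]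
      pi_eq[unfolded pi1_def pi2_def]] unfolding pi1_def pi2_def .
  have EO: "\<And>x. x \<in> Obj K \<Longrightarrow> fst x = snd x" and EM: "\<And>g. g \<in> Mor K \<Longrightarrow> fst g = snd g"
    using E unfolding lens_eq_def pi1_def pi2_def by auto
  show ?thesis unfolding cosieve_def discrete_opfibration_def
  proof (intro conjI ballI impI F)
    show "inj_on Fo (Obj A)" unfolding inj_on_def using EO by (auto simp: kcat_def)
  next
    fix x b assume x: "x \<in> Obj A" and b: "b \<in> Mor B" "Dom B b = Fo x"
    show "\<exists>!a. a \<in> Mor A \<and> Dom A a = x \<and> Fm a = b"
    proof (rule ex1I[of _ "p x b"])
      show "p x b \<in> Mor A \<and> Dom A (p x b) = x \<and> Fm (p x b) = b" using pm[OF x b] .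
    next
      fix a assume a: "a \<in> Mor A \<and> Dom A a = x \<and> Fm a = b"
      then have "(a, p x b) \<in> Mor K" using pm[OF x b] by (auto simp: kcat_def)
      then show "a = p x b" using EM by fastforce
    qed
  qed
qed

end
theorem corollary3p3:
  fixes A :: "('oa, 'ma) cat" and B :: "('ob, 'mb) cat"
    and U :: "('x \<times> 'y) itself"
  assumes "is_category A" and "is_category B"
  shows "(\<forall>Jo Jm. cosieve A B Jo Jm \<longrightarrow>
            (\<exists>put. is_lens A B (Jo, Jm, put)) \<and>
            (\<forall>put put'. is_lens A B (Jo, Jm, put) \<and> is_lens A B (Jo, Jm, put') \<longrightarrow>
                lens_eq A B (Jo, Jm, put) (Jo, Jm, put')) \<and>
            (\<forall>put. is_lens A B (Jo, Jm, put) \<longrightarrow> lens_mono U A B (Jo, Jm, put)))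
       \<and> ((\<exists>i :: 'oa \<times> 'oa \<Rightarrow> 'x. inj i) \<and> (\<exists>j :: 'ma \<times> 'ma \<Rightarrow> 'y. inj j) \<longrightarrow>
          (\<forall>Fo Fm put. is_lens A B (Fo, Fm, put) \<and> lens_mono U A B (Fo, Fm, put) \<longrightarrow>
            cosieve A B Fo Fm))"
proof -
  have P1: "\<forall>Jo Jm. cosieve A B Jo Jm \<longrightarrow>
            (\<exists>put. is_lens A B (Jo, Jm, put)) \<and>
            (\<forall>put put'. is_lens A B (Jo, Jm, put) \<and> is_lens A B (Jo, Jm, put') \<longrightarrow>
                lens_eq A B (Jo, Jm, put) (Jo, Jm, put')) \<and>
            (\<forall>put. is_lens A B (Jo, Jm, put) \<longrightarrow> lens_mono U A B (Jo, Jm, put))"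
    using part1_exists[OF assms] part1_unique part1_mono by blast
  have P2: "cosieve A B Fo Fm" if "inj (i :: 'oa \<times> 'oa \<Rightarrow> 'x)" "inj (j :: 'ma \<times> 'ma \<Rightarrow> 'y)"
    "is_lens A B (Fo, Fm, put)" "lens_mono U A B (Fo, Fm, put)" for i j Fo Fm put
    using lensctx.converse[OF lensctx.intro[OF assms that(3)] that(4,1,2)] .
  show ?thesis using P1 P2 by blast
qed

end
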